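(* Let $c$ be a non-negative integer, $r$ a positive integer, $G$ a multigraph, and $\mathcal{C}$ a cluster partition of $G$ of capacity at most $r$ such that $\delta(G/\mathcal{C})\ge 8c$. Define $w:V(G)\to\mathbb{R}_{\ge 0}$ by $w(v)=|\mathrm{ext}(C)|/|C|$ for $v\in C\in\mathcal{C}$. Then for every $c$-bond cover $X$ of $G$, \[\frac{1}{2r}\,|E(G/\mathcal{C})|\;\le\;\sum_{v\in X}w(v)\;\le\;2\,|E(G/\mathcal{C})|.\]
   Context: Graphs are finite multigraphs without loops; when contracting edges, multiplicities of parallel edges created are summed and loops are deleted; edge counts are with multiplicity. The edge-degree of a vertex is the number of incident edges; $\delta(H)$ is the minimum edge-degree of $H$. A cluster partition of $G$ is a collection $\mathcal{C}$ of pairwise disjoint nonempty vertex sets, each inducing a connected subgraph of $G$, whose union is $V(G)$; its capacity is the maximum size of a set in $\mathcal{C}$. $G/\mathcal{C}$ is the multigraph obtained from $G$ by contracting all edges inside each cluster. For $C\in\mathcal{C}$, $\mathrm{ext}(C)$ is the set of edges with exactly one endpoint in $C$. $\theta_c$ is the graph on two vertices joined by $c$ parallel edges; $X\subseteq V(G)$ is a $c$-bond cover of $G$ if $G-X$ has no $\theta_c$ minor. *)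

theory Defs
  imports Complex_Main "HOL-Library.Disjoint_Sets"
begin

text \<open>A finite loopless multigraph: vertex set, set of edge identifiers, and for each
edge its set of two (distinct) endpoints. Parallel edges are distinct identifiers.\<close>

type_synonym ('a, 'e) mgraph = "'a set \<times> 'e set \<times> ('e \<Rightarrow> 'a set)"

definition verts :: "('a, 'e) mgraph \<Rightarrow> 'a set" where "verts G = fst G"
definition edges :: "('a, 'e) mgraph \<Rightarrow> 'e set" where "edges G = fst (snd G)"
definition ends :: "('a, 'e) mgraph \<Rightarrow> 'e \<Rightarrow> 'a set" where "ends G = snd (snd G)"

definition multigraph :: "('a, 'e) mgraph \<Rightarrow> bool" where
  "multigraph G \<longleftrightarrow> finite (verts G) \<and> finite (edges G) \<and>
     (\<forall>e\<in>edges G. ends G e \<subseteq> verts G \<and> card (ends G e) = 2)"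

definition edge_degree :: "('a, 'e) mgraph \<Rightarrow> 'a \<Rightarrow> nat" where
  "edge_degree G v = card {e \<in> edges G. v \<in> ends G e}"

definition min_degree :: "('a, 'e) mgraph \<Rightarrow> nat" where
  "min_degree G = Min (edge_degree G ` verts G)"

definition adj_in :: "('a, 'e) mgraph \<Rightarrow> 'a set \<Rightarrow> ('a \<times> 'a) set" where
  "adj_in G S = {(u, v). u \<in> S \<and> v \<in> S \<and> (\<exists>e\<in>edges G. ends G e = {u, v})}"

definition connected_set :: "('a, 'e) mgraph \<Rightarrow> 'a set \<Rightarrow> bool" where
  "connected_set G S \<longleftrightarrow> S \<noteq> {} \<and> S \<subseteq> verts G \<and>
     (\<forall>u\<in>S. \<forall>v\<in>S. (u, v) \<in> (adj_in G S)\<^sup>*)"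

definition cluster_partition :: "('a, 'e) mgraph \<Rightarrow> 'a set set \<Rightarrow> bool" where
  "cluster_partition G \<C> \<longleftrightarrow> (\<forall>C\<in>\<C>. connected_set G C) \<and> disjoint \<C> \<and> \<Union>\<C> = verts G"

definition capacity :: "'a set set \<Rightarrow> nat" where
  "capacity \<C> = Max (card ` \<C>)"

text \<open>G/\<C>: vertices are the clusters; edges with both ends in one cluster become loops
and are deleted; all other edges are kept (so parallel edges add up).\<close>
definition contract :: "('a, 'e) mgraph \<Rightarrow> 'a set set \<Rightarrow> ('a set, 'e) mgraph" where
  "contract G \<C> = (\<C>, {e \<in> edges G. \<forall>C\<in>\<C>. \<not> ends G e \<subseteq> C},
                   \<lambda>e. {C \<in> \<C>. ends G e \<inter> C \<noteq> {}})"

definition ext :: "('a, 'e) mgraph \<Rightarrow> 'a set \<Rightarrow> 'e set" where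
  "ext G C = {e \<in> edges G. card (ends G e \<inter> C) = 1}"

definition cluster_of :: "'a set set \<Rightarrow> 'a \<Rightarrow> 'a set" where
  "cluster_of \<C> v = (THE C. C \<in> \<C> \<and> v \<in> C)"

definition cluster_weight :: "('a, 'e) mgraph \<Rightarrow> 'a set set \<Rightarrow> 'a \<Rightarrow> real" where
  "cluster_weight G \<C> v = real (card (ext G (cluster_of \<C> v))) / real (card (cluster_of \<C> v))"

definition delete_verts :: "('a, 'e) mgraph \<Rightarrow> 'a set \<Rightarrow> ('a, 'e) mgraph" where
  "delete_verts G X = (verts G - X, {e \<in> edges G. ends G e \<inter> X = {}}, ends G)"

text \<open>H is a minor of G, via a minor model: pairwise disjoint connected branch sets,
and an injective assignment of G-edges to H-edges joining the corresponding branch sets.\<close>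
definition has_minor :: "('a, 'e) mgraph \<Rightarrow> ('b, 'f) mgraph \<Rightarrow> bool" where
  "has_minor G H \<longleftrightarrow> (\<exists>(branch :: 'b \<Rightarrow> 'a set) (emap :: 'f \<Rightarrow> 'e).
     (\<forall>x\<in>verts H. connected_set G (branch x)) \<and>
     (\<forall>x\<in>verts H. \<forall>y\<in>verts H. x \<noteq> y \<longrightarrow> branch x \<inter> branch y = {}) \<and>
     inj_on emap (edges H) \<and>
     (\<forall>f\<in>edges H. emap f \<in> edges G \<and>
        (\<forall>x\<in>ends H f. ends G (emap f) \<inter> branch x \<noteq> {})))"

definition theta :: "nat \<Rightarrow> (nat, nat) mgraph" where
  "theta c = ({0, 1}, {..<c}, \<lambda>_. {0, 1})"

definition bond_cover :: "nat \<Rightarrow> ('a, 'e) mgraph \<Rightarrow> 'a set \<Rightarrow> bool" where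
  "bond_cover c G X \<longleftrightarrow> X \<subseteq> verts G \<and> \<not> has_minor (delete_verts G X) (theta c)"

end

theory Submission imports Defs begin

lemma connected_merge:
  assumes "connected_set G A" "connected_set G B" "e \<in> edges G" "ends G e = {u, v}" "u \<in> A" "v \<in> B"
  shows "connected_set G (A \<union> B)"
proof -
  have mA: "(adj_in G A)\<^sup>* \<subseteq> (adj_in G (A \<union> B))\<^sup>*"
    by (rule rtrancl_mono) (auto simp: adj_in_def)
  have mB: "(adj_in G B)\<^sup>* \<subseteq> (adj_in G (A \<union> B))\<^sup>*"
    by (rule rtrancl_mono) (auto simp: adj_in_def)
  have uv: "(u, v) \<in> (adj_in G (A \<union> B))\<^sup>*" "(v, u) \<in> (adj_in G (A \<union> B))\<^sup>*"
    using assms by (auto simp: adj_in_def insert_commute intro!: r_into_rtrancl)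
  have "(x, y) \<in> (adj_in G (A \<union> B))\<^sup>*" if xy: "x \<in> A \<union> B" "y \<in> A \<union> B" for x y
  proof -
    consider "x \<in> A" "y \<in> A" | "x \<in> A" "y \<in> B" | "x \<in> B" "y \<in> A" | "x \<in> B" "y \<in> B"
      using xy by blast
    then show ?thesis
    proof cases
      case 1 then show ?thesis using assms(1) mA unfolding connected_set_def by blast
    next
      case 2
      have "(x, u) \<in> (adj_in G (A \<union> B))\<^sup>*" using 2 assms(1,5) mA unfolding connected_set_def by blast
      moreover have "(v, y) \<in> (adj_in G (A \<union> B))\<^sup>*" using 2 assms(2,6) mB unfolding connected_set_def by blast
      ultimately show ?thesis using uv by (meson rtrancl_trans)
    next
      case 3
      have "(x, v) \<in> (adj_in G (A \<union> B))\<^sup>*" using 3 assms(2,6) mB unfolding connected_set_def by blast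
      moreover have "(u, y) \<in> (adj_in G (A \<union> B))\<^sup>*" using 3 assms(1,5) mA unfolding connected_set_def by blast
      ultimately show ?thesis using uv by (meson rtrancl_trans)
    next
      case 4 then show ?thesis using assms(2) mB unfolding connected_set_def by blast
    qed
  qed
  then show ?thesis using assms(1,2) unfolding connected_set_def by auto
qed

lemma theta_minor:
  assumes "connected_set G A" "connected_set G B" "A \<inter> B = {}" "finite (edges G)"
    and "c \<le> card {e \<in> edges G. ends G e \<inter> A \<noteq> {} \<and> ends G e \<inter> B \<noteq> {}}"
  shows "has_minor G (theta c)"
proof -
  let ?M = "{e \<in> edges G. ends G e \<inter> A \<noteq> {} \<and> ends G e \<inter> B \<noteq> {}}"
  have "finite ?M" using assms(4) by simp
  then obtain f where f: "f ` {..<c} \<subseteq> ?M" "inj_on f {..<c}"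
    using card_le_inj[of "{..<c}" ?M] assms(5) by auto
  let ?br = "\<lambda>x::nat. if x = 0 then A else B"
  show ?thesis unfolding has_minor_def
    apply (rule exI[of _ ?br], rule exI[of _ f])
    using f assms(1,2,3) by (auto simp: theta_def verts_def edges_def ends_def)
qed

definition cross :: "('a, 'e) mgraph \<Rightarrow> 'a set set \<Rightarrow> 'e set" where
  "cross G P = {e \<in> edges G. ends G e \<subseteq> \<Union>P \<and> (\<forall>A\<in>P. \<not> ends G e \<subseteq> A)}"

lemma card2_eq: "card S = 2 \<Longrightarrow> a \<in> S \<Longrightarrow> b \<in> S \<Longrightarrow> a \<noteq> b \<Longrightarrow> S = {a, b}"
  by (metis card_2_iff insert_commute singletonD insertE)

lemma cross_bound:
  assumes "multigraph G" "finite P" "\<forall>A\<in>P. connected_set G A" "disjoint P"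
    "\<not> has_minor G (theta c)"
  shows "card (cross G P) \<le> (c - 1) * card P"
  using assms(2-4)
proof (induction "card P" arbitrary: P rule: less_induct)
  case less
  show ?case
  proof (cases "cross G P = {}")
    case True then show ?thesis by simp
  next
    case False
    then obtain e where e: "e \<in> cross G P" by blast
    have fin: "finite (edges G)" and two: "card (ends G e) = 2"
      using assms(1) e by (auto simp: multigraph_def cross_def)
    then obtain a where a: "a \<in> ends G e" by fastforce
    then obtain A where A: "A \<in> P" "a \<in> A" using e by (auto simp: cross_def)
    then obtain b where b: "b \<in> ends G e" "b \<notin> A" using e by (auto simp: cross_def)
    then obtain B where B: "B \<in> P" "b \<in> B" using e by (auto simp: cross_def)
    have AB: "A \<noteq> B" using A B b by auto
    have dAB: "A \<inter> B = {}" using less.prems(3) A B AB by (auto simp: pairwise_def disjnt_def)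
    have ends_e: "ends G e = {a, b}" using card2_eq[OF two a b(1)] A b by auto
    let ?M = "{e \<in> edges G. ends G e \<inter> A \<noteq> {} \<and> ends G e \<inter> B \<noteq> {}}"
    have cM: "card ?M < c"
      using theta_minor[of G A B c] less.prems A B dAB fin assms(5) by force
    let ?P' = "insert (A \<union> B) (P - {A, B})"
    have eG: "e \<in> edges G" using e by (auto simp: cross_def)
    have conn: "connected_set G (A \<union> B)"
      using connected_merge[OF _ _ eG ends_e] A B less.prems(2) by auto
    have cardP: "card P \<ge> 2"
    proof -
      have "{A, B} \<subseteq> P" using A B by auto
      then have "card {A, B} \<le> card P" using less.prems(1) card_mono by blast
      then show ?thesis using AB by auto
    qed
    have AB_notin: "A \<union> B \<notin> P - {A, B}"
    proof
      assume "A \<union> B \<in> P - {A, B}"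
      moreover have "A \<union> B \<noteq> A" using B b by auto
      ultimately have "disjnt (A \<union> B) A" using pairwiseD(1)[OF less.prems(3), of "A \<union> B" A] A by blast
      then show False using A by (auto simp: disjnt_def)
    qed
    have cardP': "card ?P' = card P - 1"
      using AB_notin less.prems(1) A B AB cardP by (simp add: card_Diff_subset)
    have disjP': "disjoint ?P'"
      using less.prems(3) A B unfolding pairwise_def disjnt_def by blast
    have IH: "card (cross G ?P') \<le> (c - 1) * card ?P'"
      apply (rule less.hyps)
      using cardP cardP' less.prems conn disjP' by auto
    have sub: "cross G P \<subseteq> cross G ?P' \<union> ?M"
    proof
      fix x assume x: "x \<in> cross G P"
      show "x \<in> cross G ?P' \<union> ?M"
      proof (cases "ends G x \<subseteq> A \<union> B")
        case True
        have "\<not> ends G x \<subseteq> A" "\<not> ends G x \<subseteq> B" using x A B by (auto simp: cross_def)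
        then have "ends G x \<inter> A \<noteq> {}" "ends G x \<inter> B \<noteq> {}" using True by blast+
        then show ?thesis using x by (auto simp: cross_def)
      next
        case False
        have "\<Union>?P' = \<Union>P" using A B by auto
        then show ?thesis using x False by (auto simp: cross_def)
      qed
    qed
    have "card (cross G P) \<le> card (cross G ?P') + card ?M"
      by (rule order_trans[OF card_mono card_Un_le]) (use sub fin in \<open>auto simp: cross_def\<close>)
    also have "\<dots> \<le> (c - 1) * (card P - 1) + (c - 1)" using IH cardP' cM by simp
    also have "\<dots> = (c - 1) * card P" proof -
      obtain m where m: "card P = Suc m" using cardP by (cases "card P") auto
      show ?thesis unfolding m diff_Suc_1 mult_Suc_right by simp
    qed
    finally show ?thesis .
  qed
qed


lemma card_filter_sum: "finite A \<Longrightarrow> card {x\<in>A. P x} = (\<Sum>x\<in>A. if P x then 1 else (0::nat))"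
  using sum.inter_filter[of A "\<lambda>_. 1::nat" P] by simp

lemma double_count:
  assumes "finite E" "finite S" "\<forall>e\<in>E. card {C\<in>S. Q e C} \<le> 2"
  shows "(\<Sum>C\<in>S. card {e\<in>E. Q e C}) \<le> 2 * card E"
proof -
  have "(\<Sum>C\<in>S. card {e\<in>E. Q e C}) = (\<Sum>C\<in>S. \<Sum>e\<in>E. if Q e C then 1 else 0)"
    using assms(1) by (simp add: card_filter_sum)
  also have "\<dots> = (\<Sum>e\<in>E. \<Sum>C\<in>S. if Q e C then 1 else 0)" by (rule sum.swap)
  also have "\<dots> = (\<Sum>e\<in>E. card {C\<in>S. Q e C})"
    using assms(2) by (simp add: card_filter_sum)
  also have "\<dots> \<le> (\<Sum>e\<in>E. 2)" using assms(3) by (intro sum_mono) auto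
  finally show ?thesis by simp
qed

lemma frac_le: "(x::nat) \<le> k \<Longrightarrow> 0 < k \<Longrightarrow> real x * real e / real k \<le> real e"
proof -
  assume "x \<le> k" "0 < k"
  then have "real x * real e \<le> real k * real e" by (simp add: mult_right_mono)
  then show ?thesis using \<open>0 < k\<close> by (simp add: divide_le_eq mult.commute)
qed

lemma frac_ge: "1 \<le> (x::nat) \<Longrightarrow> 0 < k \<Longrightarrow> k \<le> r \<Longrightarrow> real e / real r \<le> real x * real e / real k"
proof -
  assume a: "1 \<le> x" "0 < k" "k \<le> r"
  have "real e / real r \<le> real e / real k" using a by (intro divide_left_mono) auto
  also have "\<dots> \<le> real x * real e / real k" using a
    by (intro divide_right_mono) (auto simp: mult_le_cancel_right1)
  finally show ?thesis .
qed

theorem lemma5: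
  fixes c r :: nat and G :: "('a, 'e) mgraph" and \<C> :: "'a set set" and X :: "'a set"
  assumes "r > 0"
    and "multigraph G"
    and "cluster_partition G \<C>"
    and "capacity \<C> \<le> r"
    and "min_degree (contract G \<C>) \<ge> 8 * c"
    and "bond_cover c G X"
  shows "1 / (2 * real r) * real (card (edges (contract G \<C>)))
           \<le> (\<Sum>v\<in>X. cluster_weight G \<C> v)
      \<and> (\<Sum>v\<in>X. cluster_weight G \<C> v) \<le> 2 * real (card (edges (contract G \<C>)))"
proof -
  define V where "V = verts G"
  define E where "E = edges (contract G \<C>)"
  have finV: "finite V" and finEG: "finite (edges G)"
    and endsG: "\<And>e. e \<in> edges G \<Longrightarrow> ends G e \<subseteq> V \<and> card (ends G e) = 2"
    using assms(2) by (auto simp: multigraph_def V_def)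
  have conC: "\<And>C. C \<in> \<C> \<Longrightarrow> connected_set G C" and disjC: "disjoint \<C>"
    and UC: "\<Union>\<C> = V" using assms(3) by (auto simp: cluster_partition_def V_def)
  have finC: "finite \<C>" using finV UC finite_UnionD by blast
  have finCl: "\<And>C. C \<in> \<C> \<Longrightarrow> finite C" using finV UC by (metis Union_upper finite_subset)
  have neC: "\<And>C. C \<in> \<C> \<Longrightarrow> C \<noteq> {}" using conC by (auto simp: connected_set_def)
  have uniq: "\<And>C C' v. C \<in> \<C> \<Longrightarrow> C' \<in> \<C> \<Longrightarrow> v \<in> C \<Longrightarrow> v \<in> C' \<Longrightarrow> C' = C"
    using pairwiseD(1)[OF disjC] unfolding disjnt_def by blast
  have clof: "\<And>C v. C \<in> \<C> \<Longrightarrow> v \<in> C \<Longrightarrow> cluster_of \<C> v = C"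
    unfolding cluster_of_def by (rule the_equality) (auto dest: uniq)
  have E_eq: "E = {e \<in> edges G. \<forall>C\<in>\<C>. \<not> ends G e \<subseteq> C}"
    by (simp add: E_def contract_def edges_def)
  have finE: "finite E" using finEG E_eq by simp
  have deg: "\<And>C. C \<in> \<C> \<Longrightarrow> edge_degree (contract G \<C>) C = card {e \<in> E. ends G e \<inter> C \<noteq> {}}"
    by (simp add: E_def edge_degree_def contract_def edges_def ends_def)
  have deg_sum: "(\<Sum>C\<in>S. edge_degree (contract G \<C>) C) \<le> 2 * card E" if S: "S \<subseteq> \<C>" for S
  proof -
    have "(\<Sum>C\<in>S. edge_degree (contract G \<C>) C) = (\<Sum>C\<in>S. card {e \<in> E. ends G e \<inter> C \<noteq> {}})"
      using S deg by (intro sum.cong) auto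
    also have "\<dots> \<le> 2 * card E"
    proof (rule double_count[OF finE])
      show "finite S" using S finC finite_subset by blast
      show "\<forall>e\<in>E. card {C \<in> S. ends G e \<inter> C \<noteq> {}} \<le> 2"
      proof
        fix e assume e: "e \<in> E"
        then have eG: "e \<in> edges G" using E_eq by auto
        have fe: "finite (ends G e)" using endsG[OF eG] card.infinite by fastforce
        have "{C \<in> S. ends G e \<inter> C \<noteq> {}} \<subseteq> cluster_of \<C> ` ends G e"
          using S clof by (force simp: image_iff)
        then have "card {C \<in> S. ends G e \<inter> C \<noteq> {}} \<le> card (cluster_of \<C> ` ends G e)"
          using fe by (intro card_mono) auto
        also have "\<dots> \<le> card (ends G e)" using fe card_image_le by blast
        finally show "card {C \<in> S. ends G e \<inter> C \<noteq> {}} \<le> 2" using endsG[OF eG] by simp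
      qed
    qed
    finally show ?thesis .
  qed
  have ext_sub: "ext G C \<subseteq> {e \<in> E. ends G e \<inter> C \<noteq> {}}" if C: "C \<in> \<C>" for C
  proof
    fix e assume e: "e \<in> ext G C"
    then have eG: "e \<in> edges G" and c1: "card (ends G e \<inter> C) = 1" by (auto simp: ext_def)
    have "\<not> ends G e \<subseteq> C'" if C': "C' \<in> \<C>" for C'
    proof
      assume sub: "ends G e \<subseteq> C'"
      show False
      proof (cases "C' = C")
        case True then show False using sub c1 endsG[OF eG] by (simp add: Int_absorb2)
      next
        case False
        then have "C' \<inter> C = {}" using pairwiseD(1)[OF disjC C' C] unfolding disjnt_def by blast
        then have "ends G e \<inter> C = {}" using sub by blast
        then show False using c1 by simp
      qed
    qed
    moreover have "ends G e \<inter> C \<noteq> {}" using c1 by auto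
    ultimately show "e \<in> {e \<in> E. ends G e \<inter> C \<noteq> {}}" using eG E_eq by auto
  qed
  have ext_le: "card (ext G C) \<le> edge_degree (contract G \<C>) C" if C: "C \<in> \<C>" for C
    using card_mono[OF _ ext_sub[OF C]] finE deg[OF C] by simp
  have capC: "card C \<le> r" if C: "C \<in> \<C>" for C
  proof -
    have "card C \<le> Max (card ` \<C>)" using C finC by (intro Max_ge) auto
    then show ?thesis using assms(4) by (simp add: capacity_def)
  qed
  have XV: "X \<subseteq> V" using assms(6) by (simp add: bond_cover_def V_def)
  define t where "t C = real (card (X \<inter> C)) * real (card (ext G C)) / real (card C)" for C
  have sumX: "(\<Sum>v\<in>X. cluster_weight G \<C> v) = (\<Sum>C\<in>\<C>. t C)"
  proof -
    have X_eq: "X = (\<Union>C\<in>\<C>. X \<inter> C)" using XV UC by blast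
    have "(\<Sum>v\<in>X. cluster_weight G \<C> v) = (\<Sum>C\<in>\<C>. \<Sum>v\<in>X \<inter> C. cluster_weight G \<C> v)"
      apply (subst X_eq, rule sum.UNION_disjoint)
      using finC finCl uniq by auto
    also have "\<dots> = (\<Sum>C\<in>\<C>. t C)"
    proof (rule sum.cong[OF refl])
      fix C assume C: "C \<in> \<C>"
      have "(\<Sum>v\<in>X \<inter> C. cluster_weight G \<C> v) = (\<Sum>v\<in>X \<inter> C. real (card (ext G C)) / real (card C))"
        using C clof by (intro sum.cong) (auto simp: cluster_weight_def)
      then show "(\<Sum>v\<in>X \<inter> C. cluster_weight G \<C> v) = t C" by (simp add: t_def)
    qed
    finally show ?thesis .
  qed
  have upper: "(\<Sum>C\<in>\<C>. t C) \<le> 2 * real (card E)"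
  proof -
    have "(\<Sum>C\<in>\<C>. t C) \<le> (\<Sum>C\<in>\<C>. real (edge_degree (contract G \<C>) C))"
    proof (rule sum_mono)
      fix C assume C: "C \<in> \<C>"
      have "t C \<le> real (card (ext G C))" unfolding t_def
        using C finCl neC by (intro frac_le card_mono) (auto simp: card_gt_0_iff)
      also have "\<dots> \<le> real (edge_degree (contract G \<C>) C)" using ext_le[OF C] by simp
      finally show "t C \<le> real (edge_degree (contract G \<C>) C)" .
    qed
    also have "\<dots> = real (\<Sum>C\<in>\<C>. edge_degree (contract G \<C>) C)" by simp
    also have "\<dots> \<le> real (2 * card E)" using deg_sum[of \<C>] by (simp only: of_nat_le_iff order_refl)
    also have "\<dots> = 2 * real (card E)" by simp
    finally show ?thesis .
  qed
  define U where "U = {C \<in> \<C>. C \<inter> X = {}}"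
  define H where "H = {C \<in> \<C>. C \<inter> X \<noteq> {}}"
  define EU where "EU = {e \<in> E. ends G e \<subseteq> \<Union>U}"
  define ER where "ER = E - EU"
  define G' where "G' = delete_verts G X"
  have G'v: "verts G' = V - X" and G'e: "edges G' = {e \<in> edges G. ends G e \<inter> X = {}}"
    and G'n: "ends G' = ends G"
    by (simp_all add: G'_def delete_verts_def verts_def edges_def ends_def V_def)
  have mg': "multigraph G'" unfolding multigraph_def G'v G'e G'n using finV finEG endsG by auto
  have finU: "finite U" using finC by (simp add: U_def)
  have conU: "\<forall>A\<in>U. connected_set G' A"
  proof
    fix A assume A: "A \<in> U"
    then have AC: "A \<in> \<C>" and AX: "A \<inter> X = {}" by (auto simp: U_def)
    have adj: "adj_in G' A = adj_in G A"
    proof -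
      have "\<And>a b e. a \<in> A \<Longrightarrow> b \<in> A \<Longrightarrow> ends G e = {a, b} \<Longrightarrow> ends G e \<inter> X = {}"
        using AX by auto
      then show ?thesis unfolding adj_in_def G'e G'n by blast
    qed
    show "connected_set G' A" using conC[OF AC] AX UC AC unfolding connected_set_def adj G'v by blast
  qed
  have disjU: "disjoint U" using disjC by (rule pairwise_subset) (auto simp: U_def)
  have nominor: "\<not> has_minor G' (theta c)" using assms(6) by (simp add: bond_cover_def G'_def)
  have cb: "card (cross G' U) \<le> (c - 1) * card U"
    by (rule cross_bound[OF mg' finU conU disjU nominor])
  have EU_sub: "EU \<subseteq> cross G' U"
  proof
    fix e assume e: "e \<in> EU"
    then have "e \<in> edges G" "ends G e \<subseteq> \<Union>U" "\<forall>C\<in>\<C>. \<not> ends G e \<subseteq> C"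
      using E_eq by (auto simp: EU_def)
    moreover have "ends G e \<inter> X = {}" using calculation(2) by (auto simp: U_def)
    ultimately show "e \<in> cross G' U" by (auto simp: cross_def G'e G'n U_def)
  qed
  have cEU: "card EU \<le> (c - 1) * card U"
    using card_mono[OF _ EU_sub] cb finEG by (simp add: cross_def G'e)
  have EU_E: "EU \<subseteq> E" by (auto simp: EU_def)
  have cE: "card E = card EU + card ER"
    using card_Diff_subset[OF finite_subset[OF EU_E finE] EU_E] card_mono[OF finE EU_E]
    by (simp add: ER_def)
  have degU: "8 * c * card U \<le> 2 * card E"
  proof (cases "U = {}")
    case True then show ?thesis by simp
  next
    case False
    have "\<forall>C\<in>U. 8 * c \<le> edge_degree (contract G \<C>) C"
    proof
      fix C assume C: "C \<in> U"
      then have CC: "C \<in> \<C>" by (simp add: U_def)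
      have "min_degree (contract G \<C>) \<le> edge_degree (contract G \<C>) C"
        unfolding min_degree_def using CC finC by (intro Min_le) (auto simp: contract_def verts_def)
      then show "8 * c \<le> edge_degree (contract G \<C>) C" using assms(5) by simp
    qed
    then have "(\<Sum>C\<in>U. 8 * c) \<le> (\<Sum>C\<in>U. edge_degree (contract G \<C>) C)" by (intro sum_mono) auto
    also have "\<dots> \<le> 2 * card E" by (rule deg_sum) (auto simp: U_def)
    finally show ?thesis by (simp add: mult.commute)
  qed
  have cER: "card ER \<le> (\<Sum>C\<in>H. card (ext G C))"
  proof -
    have "ER \<subseteq> (\<Union>C\<in>H. ext G C)"
    proof
      fix e assume e: "e \<in> ER"
      then have eE: "e \<in> E" and nU: "\<not> ends G e \<subseteq> \<Union>U" by (auto simp: ER_def EU_def)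
      have eG: "e \<in> edges G" and nsub: "\<forall>C\<in>\<C>. \<not> ends G e \<subseteq> C" using eE E_eq by auto
      obtain a where a: "a \<in> ends G e" "a \<notin> \<Union>U" using nU by blast
      then obtain C where C: "C \<in> \<C>" "a \<in> C" using endsG[OF eG] UC by blast
      have CH: "C \<in> H" using C a by (auto simp: H_def U_def)
      obtain b where b: "b \<in> ends G e" "b \<notin> C" using nsub C by blast
      have "ends G e = {a, b}" using card2_eq[of "ends G e" a b] endsG[OF eG] a b C by auto
      then have "ends G e \<inter> C = {a}" using C b by auto
      then have "e \<in> ext G C" using eG by (simp add: ext_def)
      then show "e \<in> (\<Union>C\<in>H. ext G C)" using CH by blast
    qed
    moreover have "finite (\<Union>C\<in>H. ext G C)"
      by (rule finite_subset[OF _ finEG]) (auto simp: ext_def)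
    ultimately have "card ER \<le> card (\<Union>C\<in>H. ext G C)"
      by (intro card_mono)
    also have "\<dots> \<le> (\<Sum>C\<in>H. card (ext G C))"
      using finC by (intro card_UN_le) (simp add: H_def)
    finally show ?thesis .
  qed
  have key: "card E \<le> 2 * card ER"
  proof -
    have "(c - 1) * card U \<le> c * card U" by (simp add: mult_le_mono1)
    then have p1: "card EU \<le> c * card U" using cEU by linarith
    have p2: "8 * (c * card U) \<le> 2 * card E" using degU by (simp add: mult.assoc)
    show ?thesis using p1 p2 cE by linarith
  qed
  have lowH: "(\<Sum>C\<in>H. real (card (ext G C)) / real r) \<le> (\<Sum>C\<in>\<C>. t C)"
  proof -
    have "(\<Sum>C\<in>H. real (card (ext G C)) / real r) \<le> (\<Sum>C\<in>H. t C)"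
    proof (rule sum_mono)
      fix C assume C: "C \<in> H"
      then have CC: "C \<in> \<C>" and CX: "C \<inter> X \<noteq> {}" by (auto simp: H_def)
      have "1 \<le> card (X \<inter> C)" using CX finCl[OF CC] by (simp add: Suc_le_eq card_gt_0_iff Int_commute)
      then show "real (card (ext G C)) / real r \<le> t C" unfolding t_def
        using CC finCl neC capC by (intro frac_ge) (auto simp: card_gt_0_iff)
    qed
    also have "\<dots> \<le> (\<Sum>C\<in>\<C>. t C)"
      using finC by (intro sum_mono2) (auto simp: H_def t_def)
    finally show ?thesis .
  qed
  have lower: "1 / (2 * real r) * real (card E) \<le> (\<Sum>C\<in>\<C>. t C)"
  proof -
    have k2: "real (card E) \<le> 2 * real (card ER)" using key by simp
    have "1 / (2 * real r) * real (card E) = real (card E) / (2 * real r)" by simp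
    also have "\<dots> \<le> (2 * real (card ER)) / (2 * real r)"
      using k2 by (intro divide_right_mono) auto
    also have "\<dots> = real (card ER) / real r" by simp
    also have "\<dots> \<le> real (\<Sum>C\<in>H. card (ext G C)) / real r"
    proof (rule divide_right_mono)
      show "real (card ER) \<le> real (\<Sum>C\<in>H. card (ext G C))" using cER by (simp only: of_nat_le_iff)
    qed simp
    also have "\<dots> = (\<Sum>C\<in>H. real (card (ext G C)) / real r)"
      by (simp add: sum_divide_distrib)
    finally show ?thesis using lowH by linarith
  qed
  show ?thesis unfolding sumX E_def[symmetric] by (rule conjI[OF lower upper])
qed

end
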